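(* Let $G$ be a finite group and $p$ a prime; all sums below are over nonidentity $p$-subgroups of $G$. Then: (i) $\mathcal S^*_G$ has weighting $k^H=\sum_K\mu(H,K)$, coweighting $k_K=-\mu(K)$, and $\chi(\mathcal S^*_G)=|G|\chi(\mathcal T^*_G)$. (ii) $\mathcal T^*_G$ has weighting $k^H=|G|^{-1}\sum_K\mu(H,K)$, coweighting $k_K=-|G|^{-1}\mu(K)$, and $\chi(\mathcal T^*_G)=\sum_{[K]}\frac{-\mu(K)}{|\mathcal T^*_G(K)|}$. (iii) $\mathcal L^*_G$ has weighting $k^H=|G|^{-1}\sum_K\mu(H,K)|O^pC_G(K)|$, coweighting $k_K=-|G|^{-1}\mu(K)|O^pC_G(K)|$, and $\chi(\mathcal L^*_G)=\sum_{[K]}\frac{-\mu(K)}{|\mathcal L^*_G(K)|}$. (iv) $\mathcal F^*_G$ has weighting $k^H=|G|^{-1}\sum_K\mu(H,K)|C_G(K)|$, coweighting $k_K=-|G|^{-1}\mu(K)|C_G(K)|$, and $\chi(\mathcal F^*_G)=\sum_{[K]}\frac{-\mu(K)}{|\mathcal F^*_G(K)|}$. (v) $\mathcal O^*_G$ has weighting $k^H=|G|^{-1}|H|\sum_K\mu(H,K)$, coweighting $k_K=|G|^{-1}\sum_H|H|\mu(H,K)$, and $\chi(\mathcal O^*_G)=|G|^{-1}\sum_{H,K}|H|\mu(H,K)$. Here $\sum_{[K]}$ runs over the $G$-conjugacy classes of nonidentity $p$-subgroups $K$.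
   Context: For subgroups $H,K\le G$ write $N_G(H,K)=\{g\in G: g^{-1}Hg\le K\}$; $O^p(X)$ is the smallest normal subgroup of a finite group $X$ with $p$-group quotient. Categories with objects the nonidentity $p$-subgroups of $G$ and composition induced by multiplication in $G$: $\mathcal S^*_G$ the poset under inclusion; $\mathcal T^*_G(H,K)=N_G(H,K)$; $\mathcal L^*_G(H,K)=O^p(C_G(H))\backslash N_G(H,K)$; $\mathcal F^*_G(H,K)=C_G(H)\backslash N_G(H,K)$; $\mathcal O^*_G(H,K)=N_G(H,K)/K$; $\mathcal C(K)=\mathcal C(K,K)$. Leinster: for a finite category $\mathcal C$, a weighting is $k^\bullet$ with $\sum_b|\mathcal C(a,b)|k^b=1$ for all $a$, a coweighting is $k_\bullet$ with $\sum_ak_a|\mathcal C(a,b)|=1$ for all $b$, and if both exist $\chi(\mathcal C)=\sum_bk^b=\sum_ak_a$. $\mu(H,K)$ is the Möbius function of the poset of all subgroups of $G$ ($\mu(H,H)=1$, $\mu(H,K)=-\sum_{H\le L<K}\mu(H,L)$ for $H<K$, $0$ if $H\not\le K$), $\mu(K)=\mu(1,K)$. *)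

theory Defs
  imports Complex_Main "HOL-Computational_Algebra.Primes" "HOL-Algebra.Algebra"
begin

definition psubs :: "('a,'b) monoid_scheme \<Rightarrow> nat \<Rightarrow> 'a set set" where
  "psubs G p = {H. subgroup H G \<and> H \<noteq> {\<one>\<^bsub>G\<^esub>} \<and> (\<exists>n. card H = p ^ n)}"

definition conjg :: "('a,'b) monoid_scheme \<Rightarrow> 'a \<Rightarrow> 'a set \<Rightarrow> 'a set" where
  "conjg G g H = {inv\<^bsub>G\<^esub> g \<otimes>\<^bsub>G\<^esub> h \<otimes>\<^bsub>G\<^esub> g | h. h \<in> H}"

definition transp :: "('a,'b) monoid_scheme \<Rightarrow> 'a set \<Rightarrow> 'a set \<Rightarrow> 'a set" where
  "transp G H K = {g \<in> carrier G. conjg G g H \<subseteq> K}"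

definition centr :: "('a,'b) monoid_scheme \<Rightarrow> 'a set \<Rightarrow> 'a set" where
  "centr G H = {g \<in> carrier G. \<forall>h\<in>H. g \<otimes>\<^bsub>G\<^esub> h = h \<otimes>\<^bsub>G\<^esub> g}"

definition Op :: "('a,'b) monoid_scheme \<Rightarrow> nat \<Rightarrow> 'a set \<Rightarrow> 'a set" where
  "Op G p Y = \<Inter> {N. normal N (G\<lparr>carrier := Y\<rparr>) \<and>
                       (\<exists>n. card (RCOSETS (G\<lparr>carrier := Y\<rparr>) N) = p ^ n)}"

function mu :: "('a,'b) monoid_scheme \<Rightarrow> 'a set \<Rightarrow> 'a set \<Rightarrow> int" where
  "mu G H K = (if subgroup H G \<and> subgroup K G \<and> H \<subseteq> K \<and> finite K then
      (if H = K then 1 else - (\<Sum>L\<in>{L. subgroup L G \<and> H \<subseteq> L \<and> L \<subset> K}. mu G H L))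
    else 0)"
  by auto
termination
  by (relation "measure (\<lambda>(G,H,K). card K)")
     (auto intro: psubset_card_mono)

definition mu1 :: "('a,'b) monoid_scheme \<Rightarrow> 'a set \<Rightarrow> int" where
  "mu1 G K = mu G {\<one>\<^bsub>G\<^esub>} K"

definition homS :: "'a set \<Rightarrow> 'a set \<Rightarrow> unit set" where
  "homS H K = (if H \<subseteq> K then {()} else {})"

definition homT :: "('a,'b) monoid_scheme \<Rightarrow> 'a set \<Rightarrow> 'a set \<Rightarrow> 'a set" where
  "homT G H K = transp G H K"

text \<open>O^p(C_G(H)) \ N_G(H,K): orbits of left multiplication, i.e. right cosets U g.\<close>
definition homL :: "('a,'b) monoid_scheme \<Rightarrow> nat \<Rightarrow> 'a set \<Rightarrow> 'a set \<Rightarrow> 'a set set" where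
  "homL G p H K = {Op G p (centr G H) #>\<^bsub>G\<^esub> g | g. g \<in> transp G H K}"

definition homF :: "('a,'b) monoid_scheme \<Rightarrow> 'a set \<Rightarrow> 'a set \<Rightarrow> 'a set set" where
  "homF G H K = {centr G H #>\<^bsub>G\<^esub> g | g. g \<in> transp G H K}"

text \<open>N_G(H,K)/K: left cosets g K.\<close>
definition homO :: "('a,'b) monoid_scheme \<Rightarrow> 'a set \<Rightarrow> 'a set \<Rightarrow> 'a set set" where
  "homO G H K = {g <#\<^bsub>G\<^esub> K | g. g \<in> transp G H K}"

text \<open>Leinster weightings / coweightings / Euler characteristic of a finite category,
  given by its (finite) object set and the cardinalities z a b = |C(a,b)| of its hom-sets.\<close>
definition is_weighting :: "'o set \<Rightarrow> ('o \<Rightarrow> 'o \<Rightarrow> nat) \<Rightarrow> ('o \<Rightarrow> real) \<Rightarrow> bool" where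
  "is_weighting Ob z k \<longleftrightarrow> (\<forall>a\<in>Ob. (\<Sum>b\<in>Ob. real (z a b) * k b) = 1)"

definition is_coweighting :: "'o set \<Rightarrow> ('o \<Rightarrow> 'o \<Rightarrow> nat) \<Rightarrow> ('o \<Rightarrow> real) \<Rightarrow> bool" where
  "is_coweighting Ob z k \<longleftrightarrow> (\<forall>b\<in>Ob. (\<Sum>a\<in>Ob. k a * real (z a b)) = 1)"

text \<open>Euler characteristic: the sum of a weighting (well defined when weighting and
  coweighting both exist).\<close>
definition euler_char :: "'o set \<Rightarrow> ('o \<Rightarrow> 'o \<Rightarrow> nat) \<Rightarrow> real" where
  "euler_char Ob z = (\<Sum>b\<in>Ob. (SOME k. is_weighting Ob z k) b)"

definition conjclasses :: "('a,'b) monoid_scheme \<Rightarrow> nat \<Rightarrow> 'a set set set" where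
  "conjclasses G p = {{conjg G g K | g. g \<in> carrier G} | K. K \<in> psubs G p}"

end

theory Submission
  imports Defs
begin

declare mu.simps[simp del]

lemma conjg_img: "conjg G g H = (\<lambda>h. inv\<^bsub>G\<^esub> g \<otimes>\<^bsub>G\<^esub> h \<otimes>\<^bsub>G\<^esub> g) ` H"
  unfolding conjg_def by auto

locale fgroup = group +
  assumes fin: "finite (carrier G)"
begin

lemma canc1[simp]: "g \<in> carrier G \<Longrightarrow> y \<in> carrier G \<Longrightarrow> g \<otimes> (inv g \<otimes> y) = y"
  by (simp add: m_assoc[symmetric])
lemma canc2[simp]: "g \<in> carrier G \<Longrightarrow> y \<in> carrier G \<Longrightarrow> inv g \<otimes> (g \<otimes> y) = y"
  by (simp add: m_assoc[symmetric])

lemma conjg_sub: "g \<in> carrier G \<Longrightarrow> S \<subseteq> carrier G \<Longrightarrow> conjg G g S \<subseteq> carrier G"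
  unfolding conjg_img by auto

lemma conjg_comp: "g \<in> carrier G \<Longrightarrow> h \<in> carrier G \<Longrightarrow> S \<subseteq> carrier G \<Longrightarrow>
   conjg G h (conjg G g S) = conjg G (g \<otimes> h) S"
  unfolding conjg_img image_image
  by (rule image_cong) (auto simp: inv_mult_group m_assoc subsetD)

lemma conjg_one: "S \<subseteq> carrier G \<Longrightarrow> conjg G \<one> S = S"
  unfolding conjg_img by (auto simp: subsetD image_iff)

lemma conjg_inv: "g \<in> carrier G \<Longrightarrow> S \<subseteq> carrier G \<Longrightarrow> conjg G (inv g) (conjg G g S) = S"
  by (simp add: conjg_comp conjg_one)

lemma conjg_inv2: "g \<in> carrier G \<Longrightarrow> S \<subseteq> carrier G \<Longrightarrow> conjg G g (conjg G (inv g) S) = S"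
  by (simp add: conjg_comp conjg_one)

lemma conjg_mono: "S \<subseteq> T \<Longrightarrow> conjg G g S \<subseteq> conjg G g T"
  unfolding conjg_img by auto

lemma conjg_le_iff: "g \<in> carrier G \<Longrightarrow> S \<subseteq> carrier G \<Longrightarrow> T \<subseteq> carrier G \<Longrightarrow>
   conjg G g S \<subseteq> conjg G g T \<longleftrightarrow> S \<subseteq> T"
  by (metis conjg_inv conjg_mono)

lemma conjg_eq_iff: "g \<in> carrier G \<Longrightarrow> S \<subseteq> carrier G \<Longrightarrow> T \<subseteq> carrier G \<Longrightarrow>
   conjg G g S = conjg G g T \<longleftrightarrow> S = T"
  by (metis conjg_inv)

lemma conjg_le_swap: "g \<in> carrier G \<Longrightarrow> S \<subseteq> carrier G \<Longrightarrow> T \<subseteq> carrier G \<Longrightarrow>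
   conjg G g S \<subseteq> T \<longleftrightarrow> S \<subseteq> conjg G (inv g) T"
  by (metis conjg_inv conjg_inv2 conjg_mono inv_closed)

lemma conjg_card: "g \<in> carrier G \<Longrightarrow> S \<subseteq> carrier G \<Longrightarrow> card (conjg G g S) = card S"
  unfolding conjg_img
  by (rule card_image) (auto simp: inj_on_def subsetD)

lemma conjg_finite: "finite S \<Longrightarrow> finite (conjg G g S)"
  unfolding conjg_img by simp

lemma conjg_subgroup: assumes g: "g \<in> carrier G" and H: "subgroup H G"
  shows "subgroup (conjg G g H) G"
proof (rule subgroupI)
  have Hs: "H \<subseteq> carrier G" using H subgroup.subset by blast
  show "conjg G g H \<subseteq> carrier G" using conjg_sub[OF g Hs] .
  show "conjg G g H \<noteq> {}" unfolding conjg_img using subgroup.one_closed[OF H] by blast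
  fix a b assume a: "a \<in> conjg G g H" and b: "b \<in> conjg G g H"
  then obtain x y where x: "x \<in> H" "a = inv g \<otimes> x \<otimes> g" and y: "y \<in> H" "b = inv g \<otimes> y \<otimes> g"
    unfolding conjg_img by auto
  have xc: "x \<in> carrier G" "y \<in> carrier G" using x y Hs by auto
  have "inv a = inv g \<otimes> inv x \<otimes> g" using x xc g by (simp add: inv_mult_group m_assoc)
  thus "inv a \<in> conjg G g H" unfolding conjg_img using subgroup.m_inv_closed[OF H x(1)] by blast
  have "a \<otimes> b = inv g \<otimes> (x \<otimes> y) \<otimes> g" using x y xc g
    by (simp add: m_assoc)
  thus "a \<otimes> b \<in> conjg G g H" unfolding conjg_img using subgroup.m_closed[OF H x(1) y(1)] by blast
qed

lemma conjg_single: "g \<in> carrier G \<Longrightarrow> conjg G g {\<one>} = {\<one>}"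
  unfolding conjg_img by simp

lemma conjg_centr: assumes g: "g \<in> carrier G" and H: "H \<subseteq> carrier G"
  shows "conjg G g (centr G H) = centr G (conjg G g H)"
proof -
  have 1: "conjg G g (centr G H) \<subseteq> centr G (conjg G g H)" if g: "g \<in> carrier G" and H: "H \<subseteq> carrier G" for g H
  proof
    fix x assume "x \<in> conjg G g (centr G H)"
    then obtain c where c: "c \<in> carrier G" "\<forall>h\<in>H. c \<otimes> h = h \<otimes> c" "x = inv g \<otimes> c \<otimes> g"
      unfolding conjg_img centr_def by auto
    show "x \<in> centr G (conjg G g H)" unfolding centr_def conjg_img
    proof (safe)
      show "x \<in> carrier G" using c g by simp
      fix h assume h: "h \<in> H"
      have hc: "h \<in> carrier G" using h H by auto
      have "x \<otimes> (inv g \<otimes> h \<otimes> g) = inv g \<otimes> (c \<otimes> h) \<otimes> g" using c g hc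
        by (simp add: m_assoc)
      also have "\<dots> = inv g \<otimes> (h \<otimes> c) \<otimes> g" using c h by simp
      also have "\<dots> = (inv g \<otimes> h \<otimes> g) \<otimes> x" using c g hc
        by (simp add: m_assoc)
      finally show "x \<otimes> (inv g \<otimes> h \<otimes> g) = (inv g \<otimes> h \<otimes> g) \<otimes> x" .
    qed
  qed
  have cs: "centr G H \<subseteq> carrier G" for H unfolding centr_def by auto
  have "centr G (conjg G g H) = conjg G g (conjg G (inv g) (centr G (conjg G g H)))"
    using g cs by (simp add: conjg_inv2)
  also have "\<dots> \<subseteq> conjg G g (centr G (conjg G (inv g) (conjg G g H)))"
    by (rule conjg_mono, rule 1) (use g H conjg_sub in auto)
  also have "\<dots> = conjg G g (centr G H)" using g H by (simp add: conjg_inv)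
  finally show ?thesis using 1[OF g H] by blast
qed

lemma centr_subgroup: assumes H: "H \<subseteq> carrier G" shows "subgroup (centr G H) G"
proof (rule subgroupI)
  show "centr G H \<subseteq> carrier G" unfolding centr_def by auto
  have "\<one> \<in> centr G H" unfolding centr_def using H by (auto simp: subsetD)
  thus "centr G H \<noteq> {}" by blast
  fix a b assume a: "a \<in> centr G H" and b: "b \<in> centr G H"
  have ac: "a \<in> carrier G" and ah: "\<And>h. h \<in> H \<Longrightarrow> a \<otimes> h = h \<otimes> a" using a unfolding centr_def by auto
  have bc: "b \<in> carrier G" and bh: "\<And>h. h \<in> H \<Longrightarrow> b \<otimes> h = h \<otimes> b" using b unfolding centr_def by auto
  show "inv a \<in> centr G H" unfolding centr_def
  proof (safe)
    show "inv a \<in> carrier G" using ac by simp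
    fix h assume h: "h \<in> H"
    have hc: "h \<in> carrier G" using h H by auto
    have "inv a \<otimes> h = inv a \<otimes> (h \<otimes> a) \<otimes> inv a" using ac hc by (simp add: m_assoc)
    also have "\<dots> = inv a \<otimes> (a \<otimes> h) \<otimes> inv a" using ah[OF h] by simp
    also have "\<dots> = h \<otimes> inv a" using ac hc by (simp add: m_assoc[symmetric])
    finally show "inv a \<otimes> h = h \<otimes> inv a" .
  qed
  show "a \<otimes> b \<in> centr G H" unfolding centr_def
  proof (safe)
    show "a \<otimes> b \<in> carrier G" using ac bc by simp
    fix h assume h: "h \<in> H"
    have hc: "h \<in> carrier G" using h H by auto
    have "a \<otimes> b \<otimes> h = a \<otimes> (h \<otimes> b)" using ac bc hc bh[OF h] by (simp add: m_assoc)
    also have "\<dots> = h \<otimes> (a \<otimes> b)" using ac bc hc ah[OF h] by (simp add: m_assoc[symmetric])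
    finally show "a \<otimes> b \<otimes> h = h \<otimes> (a \<otimes> b)" .
  qed
qed

end


function nu :: "('a,'b) monoid_scheme \<Rightarrow> 'a set \<Rightarrow> 'a set \<Rightarrow> int" where
  "nu G H K = (if subgroup H G \<and> subgroup K G \<and> H \<subseteq> K \<and> finite K then
      (if H = K then 1 else - (\<Sum>L\<in>{L. subgroup L G \<and> H \<subset> L \<and> L \<subseteq> K}. nu G L K))
    else 0)"
  by auto
termination
proof (relation "measure (\<lambda>(G,H,K). card K - card H)")
  fix G :: "('a,'b) monoid_scheme" and H K L
  assume a: "subgroup H G \<and> subgroup K G \<and> H \<subseteq> K \<and> finite K" "H \<noteq> K"
     and L: "L \<in> {L. subgroup L G \<and> H \<subset> L \<and> L \<subseteq> K}"
  have "finite L" using L a rev_finite_subset by blast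
  hence "card H < card L" using L psubset_card_mono by blast
  moreover have "card L \<le> card K" using L a card_mono by blast
  ultimately show "((G, L, K), G, H, K) \<in> measure (\<lambda>(G, H, K). card K - card H)" by simp
qed auto

declare nu.simps[simp del]

context fgroup begin

definition "Ivl H K = {L. subgroup L G \<and> H \<subseteq> L \<and> L \<subseteq> K}"

lemma Ivl_finite: "finite (Ivl H K)"
proof -
  have "Ivl H K \<subseteq> Pow (carrier G)" unfolding Ivl_def using subgroup.subset by blast
  thus ?thesis using fin by (meson finite_Pow_iff rev_finite_subset)
qed

lemma sub_finite: "subgroup H G \<Longrightarrow> finite H"
  by (meson fin subgroup.subset rev_finite_subset)

lemma mu_eq: assumes "subgroup H G" "subgroup K G" "H \<subseteq> K"
  shows "mu G H K = (if H = K then 1 else - (\<Sum>L\<in>{L. subgroup L G \<and> H \<subseteq> L \<and> L \<subset> K}. mu G H L))"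
  using assms sub_finite[OF assms(2)] by (subst mu.simps) simp

lemma mu_zero: "\<not> H \<subseteq> K \<Longrightarrow> mu G H K = 0"
  by (subst mu.simps) simp

lemma nu_eq: assumes "subgroup H G" "subgroup K G" "H \<subseteq> K"
  shows "nu G H K = (if H = K then 1 else - (\<Sum>L\<in>{L. subgroup L G \<and> H \<subset> L \<and> L \<subseteq> K}. nu G L K))"
  using assms sub_finite[OF assms(2)] by (subst nu.simps) simp

lemma M1: assumes "subgroup H G" "subgroup K G" "H \<subseteq> K"
  shows "(\<Sum>L\<in>Ivl H K. mu G H L) = (if H = K then 1 else 0)"
proof (cases "H = K")
  case True
  hence "Ivl H K = {K}" unfolding Ivl_def using assms by auto
  thus ?thesis using True assms mu_eq[OF assms] by simp
next
  case False
  have e: "Ivl H K = insert K {L. subgroup L G \<and> H \<subseteq> L \<and> L \<subset> K}" unfolding Ivl_def using assms by auto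
  have f: "finite {L. subgroup L G \<and> H \<subseteq> L \<and> L \<subset> K}"
    by (rule rev_finite_subset[OF Ivl_finite[of H K]]) (auto simp: Ivl_def)
  have m: "mu G H K = - (\<Sum>L\<in>{L. subgroup L G \<and> H \<subseteq> L \<and> L \<subset> K}. mu G H L)"
    using mu_eq[OF assms] False by simp
  show ?thesis unfolding e using False assms f by (simp add: m)
qed

lemma N1: assumes "subgroup H G" "subgroup K G" "H \<subseteq> K"
  shows "(\<Sum>L\<in>Ivl H K. nu G L K) = (if H = K then 1 else 0)"
proof (cases "H = K")
  case True
  hence "Ivl H K = {K}" unfolding Ivl_def using assms by auto
  thus ?thesis using True assms nu_eq[OF assms] by simp
next
  case False
  have e: "Ivl H K = insert H {L. subgroup L G \<and> H \<subset> L \<and> L \<subseteq> K}" unfolding Ivl_def using assms by auto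
  have f: "finite {L. subgroup L G \<and> H \<subset> L \<and> L \<subseteq> K}"
    by (rule rev_finite_subset[OF Ivl_finite[of H K]]) (auto simp: Ivl_def)
  have m: "nu G H K = - (\<Sum>L\<in>{L. subgroup L G \<and> H \<subset> L \<and> L \<subseteq> K}. nu G L K)"
    using nu_eq[OF assms] False by simp
  show ?thesis unfolding e using False assms f by (simp add: m)
qed

lemma mu_nu: assumes H: "subgroup H G" and K: "subgroup K G" and HK: "H \<subseteq> K"
  shows "mu G H K = nu G H K"
proof -
  let ?f = "\<lambda>L M. of_int (mu G H L) * nu G M K"
  have "(\<Sum>L\<in>Ivl H K. \<Sum>M\<in>{M\<in>Ivl H K. L \<subseteq> M}. ?f L M) = (\<Sum>M\<in>Ivl H K. \<Sum>L\<in>{L\<in>Ivl H K. L \<subseteq> M}. ?f L M)"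
    by (rule sum.swap_restrict[OF Ivl_finite Ivl_finite])
  moreover have "(\<Sum>L\<in>Ivl H K. \<Sum>M\<in>{M\<in>Ivl H K. L \<subseteq> M}. ?f L M) = mu G H K"
  proof -
    have "(\<Sum>L\<in>Ivl H K. \<Sum>M\<in>{M\<in>Ivl H K. L \<subseteq> M}. ?f L M) = (\<Sum>L\<in>Ivl H K. mu G H L * (if L = K then 1 else 0))"
    proof (rule sum.cong[OF refl])
      fix L assume L: "L \<in> Ivl H K"
      have "{M\<in>Ivl H K. L \<subseteq> M} = Ivl L K" using L unfolding Ivl_def by auto
      thus "(\<Sum>M\<in>{M\<in>Ivl H K. L \<subseteq> M}. ?f L M) = mu G H L * (if L = K then 1 else 0)"
        using N1[of L K] L K unfolding Ivl_def by (simp add: sum_distrib_left[symmetric])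
    qed
    also have "\<dots> = mu G H K" using Ivl_finite[of H K] K HK
      by (simp add: if_distrib[of "\<lambda>x. _ * x"] sum.delta' Ivl_def cong: if_cong)
    finally show ?thesis .
  qed
  moreover have "(\<Sum>M\<in>Ivl H K. \<Sum>L\<in>{L\<in>Ivl H K. L \<subseteq> M}. ?f L M) = nu G H K"
  proof -
    have "(\<Sum>M\<in>Ivl H K. \<Sum>L\<in>{L\<in>Ivl H K. L \<subseteq> M}. ?f L M) = (\<Sum>M\<in>Ivl H K. (if H = M then 1 else 0) * nu G M K)"
    proof (rule sum.cong[OF refl])
      fix M assume M: "M \<in> Ivl H K"
      have "{L\<in>Ivl H K. L \<subseteq> M} = Ivl H M" using M unfolding Ivl_def by auto
      thus "(\<Sum>L\<in>{L\<in>Ivl H K. L \<subseteq> M}. ?f L M) = (if H = M then 1 else 0) * nu G M K"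
        using M1[of H M] M H unfolding Ivl_def by (simp add: sum_distrib_right[symmetric])
    qed
    also have "\<dots> = nu G H K" using Ivl_finite[of H K] H HK
      by (simp add: if_distrib[of "\<lambda>x. x * _"] sum.delta Ivl_def cong: if_cong)
    finally show ?thesis .
  qed
  ultimately show ?thesis by simp
qed

lemma M2: assumes "subgroup H G" "subgroup K G" "H \<subseteq> K"
  shows "(\<Sum>L\<in>Ivl H K. mu G L K) = (if H = K then 1 else 0)"
proof -
  have "(\<Sum>L\<in>Ivl H K. mu G L K) = (\<Sum>L\<in>Ivl H K. nu G L K)"
    by (rule sum.cong[OF refl]) (use assms in \<open>auto simp: Ivl_def intro!: mu_nu\<close>)
  thus ?thesis using N1[OF assms] by simp
qed

end


context fgroup begin

lemma psubsD: "K \<in> psubs G p \<Longrightarrow> subgroup K G \<and> K \<noteq> {\<one>} \<and> (\<exists>n. card K = p ^ n)"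
  unfolding psubs_def by simp

lemma psubs_sub: "K \<in> psubs G p \<Longrightarrow> K \<subseteq> carrier G"
  using psubsD subgroup.subset by blast

lemma psubs_finite: "finite (psubs G p)"
proof -
  have "psubs G p \<subseteq> Pow (carrier G)" using psubs_sub by blast
  thus ?thesis using fin by (meson finite_Pow_iff rev_finite_subset)
qed

lemma one_notin_psubs: "{\<one>} \<notin> psubs G p"
  unfolding psubs_def by simp

lemma psubs_down: assumes p: "Factorial_Ring.prime p" and L: "subgroup L G" "L \<noteq> {\<one>}" and LK: "L \<subseteq> K"
  and K: "K \<in> psubs G p" shows "L \<in> psubs G p"
proof -
  have Ks: "subgroup K G" and n: "\<exists>n. card K = p ^ n" using psubsD[OF K] by auto
  then obtain n where n: "card K = p ^ n" by blast
  have "subgroup L (G\<lparr>carrier := K\<rparr>)" using subgroup_incl[OF L(1) Ks LK] .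
  moreover have "group (G\<lparr>carrier := K\<rparr>)" using subgroup_imp_group[OF Ks] .
  ultimately have "card (rcosets\<^bsub>G\<lparr>carrier := K\<rparr>\<^esub> L) * card L = order (G\<lparr>carrier := K\<rparr>)"
    using group.lagrange by blast
  hence "card L dvd card K" unfolding order_def by (metis dvd_triv_right partial_object.select_convs(1) partial_object.surjective partial_object.update_convs(1))
  hence "\<exists>i\<le>n. card L = p ^ i" using n divides_primepow_nat[OF p] by simp
  thus ?thesis unfolding psubs_def using L by auto
qed

lemma psubs_conj: assumes g: "g \<in> carrier G" and K: "K \<in> psubs G p"
  shows "conjg G g K \<in> psubs G p"
proof -
  have Ks: "subgroup K G" "K \<noteq> {\<one>}" "\<exists>n. card K = p ^ n" using psubsD[OF K] by auto
  have ss: "K \<subseteq> carrier G" using Ks(1) subgroup.subset by blast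
  have "conjg G g K \<noteq> {\<one>}"
  proof
    assume "conjg G g K = {\<one>}"
    hence "conjg G g K = conjg G g {\<one>}" using conjg_single[OF g] by simp
    hence "K = {\<one>}" using conjg_eq_iff[OF g ss] by simp
    thus False using Ks by simp
  qed
  thus ?thesis unfolding psubs_def using conjg_subgroup[OF g Ks(1)] conjg_card[OF g ss] Ks by simp
qed

lemma mu_conj: assumes g: "g \<in> carrier G"
  shows "subgroup H G \<Longrightarrow> subgroup K G \<Longrightarrow> mu G (conjg G g H) (conjg G g K) = mu G H K"
proof (induction "card K" arbitrary: H K rule: less_induct)
  case less
  have Hs: "H \<subseteq> carrier G" and Ks: "K \<subseteq> carrier G" using less.prems subgroup.subset by auto
  have Hg: "subgroup (conjg G g H) G" and Kg: "subgroup (conjg G g K) G"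
    using conjg_subgroup[OF g] less.prems by auto
  show ?case
  proof (cases "H \<subseteq> K")
    case False
    hence "\<not> conjg G g H \<subseteq> conjg G g K" using conjg_le_iff[OF g Hs Ks] by simp
    thus ?thesis using False mu_zero by simp
  next
    case HK: True
    show ?thesis
    proof (cases "H = K")
      case True thus ?thesis using mu_eq[OF less.prems HK] mu_eq[OF Hg Kg] by simp
    next
      case False
      have HKg: "conjg G g H \<subseteq> conjg G g K" using HK conjg_mono by blast
      have ne: "conjg G g H \<noteq> conjg G g K" using False conjg_eq_iff[OF g Hs Ks] by simp
      let ?S = "{L. subgroup L G \<and> H \<subseteq> L \<and> L \<subset> K}"
      let ?S' = "{L. subgroup L G \<and> conjg G g H \<subseteq> L \<and> L \<subset> conjg G g K}"
      have img: "?S' = conjg G g ` ?S"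
      proof
        show "conjg G g ` ?S \<subseteq> ?S'"
        proof
          fix M assume "M \<in> conjg G g ` ?S"
          then obtain L where L: "L \<in> ?S" "M = conjg G g L" by blast
          have Ls: "L \<subseteq> carrier G" using L subgroup.subset by auto
          show "M \<in> ?S'" using L conjg_subgroup[OF g] conjg_le_iff[OF g Hs Ls] conjg_le_iff[OF g Ls Ks]
             conjg_eq_iff[OF g Ls Ks] by blast
        qed
        show "?S' \<subseteq> conjg G g ` ?S"
        proof
          fix M assume M: "M \<in> ?S'"
          have Ms: "M \<subseteq> carrier G" using M subgroup.subset by auto
          let ?L = "conjg G (inv g) M"
          have Ls: "?L \<subseteq> carrier G" using conjg_sub g Ms by simp
          have e: "M = conjg G g ?L" using conjg_inv2[OF g Ms] by simp
          have "?L \<in> ?S" using M conjg_subgroup[of "inv g" M] g e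
             conjg_le_iff[OF g Hs Ls] conjg_le_iff[OF g Ls Ks] conjg_eq_iff[OF g Ls Ks] by auto
          thus "M \<in> conjg G g ` ?S" using e by blast
        qed
      qed
      have inj: "inj_on (conjg G g) ?S"
        by (rule inj_onI) (metis (no_types, lifting) conjg_eq_iff[OF g] mem_Collect_eq subgroup.subset)
      have "mu G (conjg G g H) (conjg G g K) = - (\<Sum>L\<in>?S'. mu G (conjg G g H) L)"
        using mu_eq[OF Hg Kg HKg] ne by simp
      also have "\<dots> = - (\<Sum>L\<in>?S. mu G (conjg G g H) (conjg G g L))"
        unfolding img by (simp add: sum.reindex[OF inj])
      also have "\<dots> = - (\<Sum>L\<in>?S. mu G H L)"
      proof -
        have "(\<Sum>L\<in>?S. mu G (conjg G g H) (conjg G g L)) = (\<Sum>L\<in>?S. mu G H L)"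
        proof (rule sum.cong[OF refl])
          fix L assume L: "L \<in> ?S"
          have "finite K" using sub_finite less.prems by blast
          hence "card L < card K" using L psubset_card_mono by blast
          thus "mu G (conjg G g H) (conjg G g L) = mu G H L" using less.hyps L less.prems by blast
        qed
        thus ?thesis by simp
      qed
      also have "\<dots> = mu G H K" using mu_eq[OF less.prems HK] False by simp
      finally show ?thesis .
    qed
  qed
qed

lemma mu1_conj: "g \<in> carrier G \<Longrightarrow> subgroup K G \<Longrightarrow> mu1 G (conjg G g K) = mu1 G K"
  unfolding mu1_def using mu_conj[of g "{\<one>}" K] conjg_single triv_subgroup by simp

lemma card_transp: "real (card (transp G a b)) = (\<Sum>g\<in>carrier G. if conjg G g a \<subseteq> b then 1 else 0)"
  unfolding transp_def using fin by (simp add: sum.inter_filter[symmetric])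

lemma TS: "(\<Sum>b\<in>psubs G p. real (card (transp G a b)) * f b)
   = (\<Sum>g\<in>carrier G. \<Sum>b\<in>{b\<in>psubs G p. conjg G g a \<subseteq> b}. f b)"
proof -
  have "(\<Sum>b\<in>psubs G p. real (card (transp G a b)) * f b)
     = (\<Sum>b\<in>psubs G p. \<Sum>g\<in>carrier G. if conjg G g a \<subseteq> b then f b else 0)"
    by (auto simp: card_transp sum_distrib_right intro!: sum.cong)
  also have "\<dots> = (\<Sum>g\<in>carrier G. \<Sum>b\<in>psubs G p. if conjg G g a \<subseteq> b then f b else 0)"
    by (rule sum.swap)
  also have "\<dots> = (\<Sum>g\<in>carrier G. \<Sum>b\<in>{b\<in>psubs G p. conjg G g a \<subseteq> b}. f b)"
    using psubs_finite by (simp add: sum.inter_filter)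
  finally show ?thesis .
qed

lemma TC: assumes b: "b \<subseteq> carrier G"
  shows "(\<Sum>a\<in>psubs G p. f a * real (card (transp G a b)))
   = (\<Sum>g\<in>carrier G. \<Sum>a\<in>{a\<in>psubs G p. a \<subseteq> conjg G (inv g) b}. f a)"
proof -
  have "(\<Sum>a\<in>psubs G p. f a * real (card (transp G a b)))
     = (\<Sum>a\<in>psubs G p. \<Sum>g\<in>carrier G. if conjg G g a \<subseteq> b then f a else 0)"
    by (auto simp: card_transp sum_distrib_left intro!: sum.cong)
  also have "\<dots> = (\<Sum>g\<in>carrier G. \<Sum>a\<in>psubs G p. if conjg G g a \<subseteq> b then f a else 0)"
    by (rule sum.swap)
  also have "\<dots> = (\<Sum>g\<in>carrier G. \<Sum>a\<in>psubs G p. if a \<subseteq> conjg G (inv g) b then f a else 0)"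
    by (intro sum.cong refl) (simp add: conjg_le_swap[OF _ psubs_sub b])
  also have "\<dots> = (\<Sum>g\<in>carrier G. \<Sum>a\<in>{a\<in>psubs G p. a \<subseteq> conjg G (inv g) b}. f a)"
    using psubs_finite by (simp add: sum.inter_filter)
  finally show ?thesis .
qed

end


locale pfg = fgroup + fixes p :: nat assumes prime: "Factorial_Ring.prime p"
begin

lemma sub_ne_one: "x \<in> psubs G p \<Longrightarrow> subgroup b G \<Longrightarrow> x \<subseteq> b \<Longrightarrow> b \<noteq> {\<one>}"
  using psubsD subgroup.one_closed by blast

lemma Ob_Ivl: assumes x: "x \<in> psubs G p" and K: "K \<in> psubs G p"
  shows "{b\<in>psubs G p. x \<subseteq> b \<and> b \<subseteq> K} = Ivl x K"
  unfolding Ivl_def using psubs_down[OF prime _ _ _ K] sub_ne_one[OF x] psubsD by blast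

lemma sumW: assumes x: "x \<in> psubs G p" and K: "K \<in> psubs G p"
  shows "(\<Sum>b\<in>{b\<in>psubs G p. x \<subseteq> b}. real_of_int (mu G b K)) = (if x = K then 1 else 0)"
proof -
  have "(\<Sum>b\<in>{b\<in>psubs G p. x \<subseteq> b}. real_of_int (mu G b K)) = (\<Sum>b\<in>{b\<in>psubs G p. x \<subseteq> b \<and> b \<subseteq> K}. real_of_int (mu G b K))"
    by (rule sum.mono_neutral_right) (use psubs_finite in \<open>auto simp: mu_zero\<close>)
  also have "\<dots> = (if x = K then 1 else 0)"
  proof (cases "x \<subseteq> K")
    case True
    have "(\<Sum>b\<in>Ivl x K. real_of_int (mu G b K)) = real_of_int (\<Sum>b\<in>Ivl x K. mu G b K)" by simp
    thus ?thesis using Ob_Ivl[OF x K] M2[OF _ _ True] psubsD x K by simp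
  next
    case False
    hence e: "{b\<in>psubs G p. x \<subseteq> b \<and> b \<subseteq> K} = {}" by blast
    have "x \<noteq> K" using False by blast
    thus ?thesis unfolding e by simp
  qed
  finally show ?thesis .
qed

lemma W: assumes x: "x \<in> psubs G p"
  shows "(\<Sum>b\<in>{b\<in>psubs G p. x \<subseteq> b}. \<Sum>K\<in>psubs G p. real_of_int (mu G b K) * w K) = w x"
proof -
  have fin2: "finite {b\<in>psubs G p. x \<subseteq> b}" using psubs_finite by simp
  have "(\<Sum>b\<in>{b\<in>psubs G p. x \<subseteq> b}. \<Sum>K\<in>psubs G p. real_of_int (mu G b K) * w K)
      = (\<Sum>K\<in>psubs G p. \<Sum>b\<in>{b\<in>psubs G p. x \<subseteq> b}. real_of_int (mu G b K) * w K)"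
    by (rule sum.swap)
  also have "\<dots> = (\<Sum>K\<in>psubs G p. (if x = K then 1 else 0) * w K)"
    by (intro sum.cong refl) (simp add: sum_distrib_right[symmetric] sumW[OF x])
  also have "\<dots> = w x" using x psubs_finite by (simp add: if_distrib[of "\<lambda>t. t * _"] sum.delta cong: if_cong)
  finally show ?thesis .
qed

lemma sumC: assumes H: "H \<in> psubs G p" and b: "b \<in> psubs G p"
  shows "(\<Sum>a\<in>{a\<in>psubs G p. a \<subseteq> b}. real_of_int (mu G H a)) = (if H = b then 1 else 0)"
proof -
  have "(\<Sum>a\<in>{a\<in>psubs G p. a \<subseteq> b}. real_of_int (mu G H a)) = (\<Sum>a\<in>{a\<in>psubs G p. H \<subseteq> a \<and> a \<subseteq> b}. real_of_int (mu G H a))"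
  proof (rule sum.mono_neutral_right)
    show "finite {a\<in>psubs G p. a \<subseteq> b}" using psubs_finite by simp
    show "\<forall>i\<in>{a\<in>psubs G p. a \<subseteq> b} - {a\<in>psubs G p. H \<subseteq> a \<and> a \<subseteq> b}. real_of_int (mu G H i) = 0"
      by (metis (mono_tags, lifting) DiffE mem_Collect_eq mu_zero of_int_0)
  qed auto
  also have "\<dots> = (if H = b then 1 else 0)"
  proof (cases "H \<subseteq> b")
    case True
    have "(\<Sum>a\<in>Ivl H b. real_of_int (mu G H a)) = real_of_int (\<Sum>a\<in>Ivl H b. mu G H a)" by simp
    thus ?thesis using Ob_Ivl[OF H b] M1[OF _ _ True] psubsD H b by simp
  next
    case False
    hence e: "{a\<in>psubs G p. H \<subseteq> a \<and> a \<subseteq> b} = {}" by blast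
    have "H \<noteq> b" using False by blast
    thus ?thesis unfolding e by simp
  qed
  finally show ?thesis .
qed

lemma sumC1: assumes b: "b \<in> psubs G p"
  shows "(\<Sum>a\<in>{a\<in>psubs G p. a \<subseteq> b}. real_of_int (mu1 G a)) = -1"
proof -
  have bs: "subgroup b G" "b \<noteq> {\<one>}" using psubsD[OF b] by auto
  have e: "Ivl {\<one>} b = insert {\<one>} {a\<in>psubs G p. a \<subseteq> b}"
  proof
    show "Ivl {\<one>} b \<subseteq> insert {\<one>} {a\<in>psubs G p. a \<subseteq> b}"
      unfolding Ivl_def using psubs_down[OF prime _ _ _ b] by blast
    show "insert {\<one>} {a\<in>psubs G p. a \<subseteq> b} \<subseteq> Ivl {\<one>} b"
      unfolding Ivl_def using psubsD subgroup.one_closed triv_subgroup bs by blast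
  qed
  have one_b: "{\<one>} \<subseteq> b" using subgroup.one_closed[OF bs(1)] by blast
  have "(\<Sum>a\<in>Ivl {\<one>} b. mu G {\<one>} a) = 0" using M1[OF triv_subgroup bs(1) one_b] bs by simp
  hence "mu G {\<one>} {\<one>} + (\<Sum>a\<in>{a\<in>psubs G p. a \<subseteq> b}. mu G {\<one>} a) = 0"
    unfolding e using psubs_finite one_notin_psubs by (subst (asm) sum.insert) auto
  moreover have "mu G {\<one>} {\<one>} = 1" using mu_eq[OF triv_subgroup triv_subgroup] by simp
  ultimately have "(\<Sum>a\<in>{a\<in>psubs G p. a \<subseteq> b}. mu G {\<one>} a) = -1" by simp
  hence "real_of_int (\<Sum>a\<in>{a\<in>psubs G p. a \<subseteq> b}. mu G {\<one>} a) = -1" by simp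
  thus ?thesis unfolding mu1_def by simp
qed

lemma RC: assumes U: "subgroup U G" and A: "A \<subseteq> carrier G"
  and cl: "\<And>u x. u \<in> U \<Longrightarrow> x \<in> A \<Longrightarrow> u \<otimes> x \<in> A"
  shows "card {U #> g | g. g \<in> A} * card U = card A"
proof -
  let ?C = "{U #> g | g. g \<in> A}"
  have Us: "U \<subseteq> carrier G" using U subgroup.subset by blast
  have Cr: "?C \<subseteq> rcosets U" using A rcosetsI[OF Us] by blast
  have un: "\<Union>?C = A"
  proof
    show "\<Union>?C \<subseteq> A" unfolding r_coset_def using cl by auto
    show "A \<subseteq> \<Union>?C" using rcos_self[OF _ U] A by blast
  qed
  have finX: "finite A" using A fin rev_finite_subset by blast
  have "card U * card ?C = card (\<Union>?C)"
  proof (rule card_partition)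
    show "finite ?C" using finX by simp
    show "finite (\<Union>?C)" using un finX by simp
    show "\<And>c. c \<in> ?C \<Longrightarrow> card c = card U" using Cr card_rcosets_equal[OF _ Us] by auto
    show "\<And>c1 c2. c1 \<in> ?C \<Longrightarrow> c2 \<in> ?C \<Longrightarrow> c1 \<noteq> c2 \<Longrightarrow> c1 \<inter> c2 = {}"
      using Cr rcos_disjoint[OF U] unfolding pairwise_def disjnt_def by blast
  qed
  thus ?thesis using un by (simp add: mult.commute)
qed

lemma LC: assumes K: "subgroup K G" and A: "A \<subseteq> carrier G"
  and cl: "\<And>k x. k \<in> K \<Longrightarrow> x \<in> A \<Longrightarrow> x \<otimes> k \<in> A"
  shows "card {g <# K | g. g \<in> A} * card K = card A"
proof -
  let ?C = "{g <# K | g. g \<in> A}"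
  have Ks: "K \<subseteq> carrier G" using K subgroup.subset by blast
  have Cr: "?C \<subseteq> lcosets K" using A unfolding LCOSETS_def by blast
  have un: "\<Union>?C = A"
  proof
    show "\<Union>?C \<subseteq> A" unfolding l_coset_def using cl by auto
    show "A \<subseteq> \<Union>?C" using lcos_self[OF _ K] A by blast
  qed
  have finX: "finite A" using A fin rev_finite_subset by blast
  have "card K * card ?C = card (\<Union>?C)"
  proof (rule card_partition)
    show "finite ?C" using finX by simp
    show "finite (\<Union>?C)" using un finX by simp
    show "\<And>c. c \<in> ?C \<Longrightarrow> card c = card K" using Cr l_card_cosets_equal[OF _ Ks fin] by auto
    show "\<And>c1 c2. c1 \<in> ?C \<Longrightarrow> c2 \<in> ?C \<Longrightarrow> c1 \<noteq> c2 \<Longrightarrow> c1 \<inter> c2 = {}"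
      using Cr lcos_disjoint[OF K] by blast
  qed
  thus ?thesis using un by (simp add: mult.commute)
qed

lemma transp_sub: "transp G H K \<subseteq> carrier G" unfolding transp_def by auto

lemma card_homF: assumes H: "H \<subseteq> carrier G"
  shows "card (homF G H K) * card (centr G H) = card (transp G H K)"
  unfolding homF_def
proof (rule RC[OF centr_subgroup[OF H] transp_sub])
  fix u x assume u: "u \<in> centr G H" and x: "x \<in> transp G H K"
  have uc: "u \<in> carrier G" and xc: "x \<in> carrier G" using u x unfolding centr_def transp_def by auto
  have "conjg G (u \<otimes> x) H = conjg G x (conjg G u H)" using conjg_comp uc xc H by simp
  also have "conjg G u H = H" unfolding conjg_img
  proof -
    have "\<And>h. h \<in> H \<Longrightarrow> inv u \<otimes> h \<otimes> u = h"
    proof -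
      fix h assume h: "h \<in> H"
      have hc: "h \<in> carrier G" and uc: "u \<in> carrier G" and uh: "u \<otimes> h = h \<otimes> u"
        using h u H unfolding centr_def by auto
      have "inv u \<otimes> h \<otimes> u = inv u \<otimes> (u \<otimes> h)" using uh hc uc by (simp add: m_assoc)
      thus "inv u \<otimes> h \<otimes> u = h" using hc uc by simp
    qed
    thus "(\<lambda>h. inv u \<otimes> h \<otimes> u) ` H = H" by simp
  qed
  finally show "u \<otimes> x \<in> transp G H K" using x uc xc unfolding transp_def by simp
qed

lemma card_homO: assumes H: "H \<subseteq> carrier G" and K: "subgroup K G"
  shows "card (homO G H K) * card K = card (transp G H K)"
  unfolding homO_def
proof (rule LC[OF K transp_sub])
  fix k x assume k: "k \<in> K" and x: "x \<in> transp G H K"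
  have kc: "k \<in> carrier G" and xc: "x \<in> carrier G" using k x K subgroup.subset unfolding transp_def by auto
  have "conjg G (x \<otimes> k) H = conjg G k (conjg G x H)" using conjg_comp kc xc H by simp
  also have "\<dots> \<subseteq> conjg G k K" using x conjg_mono unfolding transp_def by blast
  also have "\<dots> \<subseteq> K" unfolding conjg_img using k K
    by (auto intro!: subgroup.m_closed subgroup.m_inv_closed)
  finally show "x \<otimes> k \<in> transp G H K" using x kc xc unfolding transp_def by simp
qed

end


lemma euler_char_eq: assumes fin: "finite Ob" and w: "is_weighting Ob z k" and cw: "is_coweighting Ob z k'"
  shows "euler_char Ob z = (\<Sum>a\<in>Ob. k' a)"
proof -
  define k0 where "k0 = (SOME k. is_weighting Ob z k)"
  have w0: "is_weighting Ob z k0" unfolding k0_def by (rule someI[where P="is_weighting Ob z" and x=k, OF w])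
  have "(\<Sum>b\<in>Ob. k0 b) = (\<Sum>b\<in>Ob. (\<Sum>a\<in>Ob. k' a * real (z a b)) * k0 b)"
    using cw unfolding is_coweighting_def by simp
  also have "\<dots> = (\<Sum>a\<in>Ob. k' a * (\<Sum>b\<in>Ob. real (z a b) * k0 b))"
    by (simp add: sum_distrib_right sum_distrib_left mult.assoc) (rule sum.swap)
  also have "\<dots> = (\<Sum>a\<in>Ob. k' a)" using w0 unfolding is_weighting_def by simp
  finally show ?thesis unfolding euler_char_def k0_def .
qed

context pfg begin

lemma cmul: "g \<in> carrier G \<Longrightarrow> a \<in> carrier G \<Longrightarrow> b \<in> carrier G \<Longrightarrow>
  (inv g \<otimes> a \<otimes> g) \<otimes> (inv g \<otimes> b \<otimes> g) = inv g \<otimes> (a \<otimes> b) \<otimes> g"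
  by (simp add: m_assoc)

lemma cinv: "g \<in> carrier G \<Longrightarrow> a \<in> carrier G \<Longrightarrow> inv (inv g \<otimes> a \<otimes> g) = inv g \<otimes> inv a \<otimes> g"
  by (simp add: inv_mult_group m_assoc)

definition "Fam Y = {N. normal N (G\<lparr>carrier := Y\<rparr>) \<and> (\<exists>n. card (RCOSETS (G\<lparr>carrier := Y\<rparr>) N) = p ^ n)}"

lemma Op_Fam: "Op G p Y = \<Inter> (Fam Y)" unfolding Op_def Fam_def by simp

lemma index_eq: assumes Y: "subgroup Y G" and N: "subgroup N (G\<lparr>carrier := Y\<rparr>)"
  shows "card (RCOSETS (G\<lparr>carrier := Y\<rparr>) N) * card N = card Y"
  using group.lagrange[OF subgroup_imp_group[OF Y] N] unfolding order_def by simp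

lemma Fam_self: assumes Y: "subgroup Y G" shows "Y \<in> Fam Y"
proof -
  have gY: "group (G\<lparr>carrier := Y\<rparr>)" using subgroup_imp_group[OF Y] .
  have n: "Y \<lhd> G\<lparr>carrier := Y\<rparr>" using group.normal_self[OF gY] by simp
  have "card (RCOSETS (G\<lparr>carrier := Y\<rparr>) Y) * card Y = card Y"
    using index_eq[OF Y normal_imp_subgroup[OF n]] .
  moreover have "card Y > 0" using sub_finite[OF Y] subgroup.one_closed[OF Y] card_gt_0_iff by blast
  ultimately have "card (RCOSETS (G\<lparr>carrier := Y\<rparr>) Y) = p ^ 0" by simp
  thus ?thesis unfolding Fam_def using n by blast
qed

lemma Fam_sub: assumes Y: "subgroup Y G" and N: "N \<in> Fam Y" shows "subgroup N G" "N \<subseteq> Y"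
proof -
  have "subgroup N (G\<lparr>carrier := Y\<rparr>)" using N normal_imp_subgroup unfolding Fam_def by blast
  thus "subgroup N G" using incl_subgroup[OF Y] by blast
  show "N \<subseteq> Y" using \<open>subgroup N (G\<lparr>carrier := Y\<rparr>)\<close> subgroup.subset by force
qed

lemma Op_props: assumes Y: "subgroup Y G" shows "subgroup (Op G p Y) G" "Op G p Y \<subseteq> Y"
proof -
  show "subgroup (Op G p Y) G" unfolding Op_Fam using Fam_sub[OF Y] Fam_self[OF Y]
    by (intro subgroups_Inter) auto
  show "Op G p Y \<subseteq> Y" unfolding Op_Fam using Fam_self[OF Y] by blast
qed

lemma Fam_conj: assumes g: "g \<in> carrier G" and Y: "subgroup Y G" and N: "N \<in> Fam Y"
  shows "conjg G g N \<in> Fam (conjg G g Y)"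
proof -
  have NG: "subgroup N G" and NY: "N \<subseteq> Y" using Fam_sub[OF Y N] by auto
  have Ys: "Y \<subseteq> carrier G" using Y subgroup.subset by blast
  have Ns: "N \<subseteq> carrier G" using NY Ys by blast
  let ?Y = "conjg G g Y" and ?N = "conjg G g N"
  have Yg: "subgroup ?Y G" using conjg_subgroup[OF g Y] .
  have Ng: "subgroup ?N G" using conjg_subgroup[OF g NG] .
  have NYg: "?N \<subseteq> ?Y" using conjg_mono[OF NY] .
  have gY: "group (G\<lparr>carrier := Y\<rparr>)" using subgroup_imp_group[OF Y] .
  have gYg: "group (G\<lparr>carrier := ?Y\<rparr>)" using subgroup_imp_group[OF Yg] .
  have nN: "N \<lhd> G\<lparr>carrier := Y\<rparr>" using N unfolding Fam_def by blast
  have cl: "\<And>y n. y \<in> Y \<Longrightarrow> n \<in> N \<Longrightarrow> y \<otimes> n \<otimes> inv y \<in> N"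
  proof -
    fix y n assume y: "y \<in> Y" and n: "n \<in> N"
    have "y \<otimes>\<^bsub>G\<lparr>carrier := Y\<rparr>\<^esub> n \<otimes>\<^bsub>G\<lparr>carrier := Y\<rparr>\<^esub> inv\<^bsub>G\<lparr>carrier := Y\<rparr>\<^esub> y \<in> N"
      using nN y n unfolding group.normal_inv_iff[OF gY] by simp
    thus "y \<otimes> n \<otimes> inv y \<in> N" using m_inv_consistent[OF Y y] by simp
  qed
  have "?N \<lhd> G\<lparr>carrier := ?Y\<rparr>"
    unfolding group.normal_inv_iff[OF gYg]
  proof (intro conjI ballI)
    show "subgroup ?N (G\<lparr>carrier := ?Y\<rparr>)" using subgroup_incl[OF Ng Yg NYg] .
    fix x h assume x: "x \<in> carrier (G\<lparr>carrier := ?Y\<rparr>)" and h: "h \<in> ?N"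
    have x': "x \<in> ?Y" using x by simp
    obtain y where y: "y \<in> Y" "x = inv g \<otimes> y \<otimes> g" using x' unfolding conjg_img by auto
    obtain n where n: "n \<in> N" "h = inv g \<otimes> n \<otimes> g" using h unfolding conjg_img by auto
    have yc: "y \<in> carrier G" and nc: "n \<in> carrier G" using y n Ys Ns by auto
    have "x \<otimes> h \<otimes> inv x = inv g \<otimes> (y \<otimes> n \<otimes> inv y) \<otimes> g"
      using y n yc nc g by (simp add: cinv cmul)
    hence "x \<otimes> h \<otimes> inv x \<in> ?N" unfolding conjg_img using cl[OF y(1) n(1)] by blast
    thus "x \<otimes>\<^bsub>G\<lparr>carrier := ?Y\<rparr>\<^esub> h \<otimes>\<^bsub>G\<lparr>carrier := ?Y\<rparr>\<^esub> inv\<^bsub>G\<lparr>carrier := ?Y\<rparr>\<^esub> x \<in> ?N"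
      using m_inv_consistent[OF Yg x'] by simp
  qed
  moreover have "\<exists>n. card (RCOSETS (G\<lparr>carrier := ?Y\<rparr>) ?N) = p ^ n"
  proof -
    have i1: "card (RCOSETS (G\<lparr>carrier := Y\<rparr>) N) * card N = card Y"
      using index_eq[OF Y normal_imp_subgroup[OF nN]] .
    have i2: "card (RCOSETS (G\<lparr>carrier := ?Y\<rparr>) ?N) * card ?N = card ?Y"
      using index_eq[OF Yg subgroup_incl[OF Ng Yg NYg]] .
    have "card N > 0" using sub_finite[OF NG] subgroup.one_closed[OF NG] card_gt_0_iff by blast
    hence "card (RCOSETS (G\<lparr>carrier := ?Y\<rparr>) ?N) = card (RCOSETS (G\<lparr>carrier := Y\<rparr>) N)"
      using i1 i2 conjg_card[OF g Ns] conjg_card[OF g Ys] by (metis mult_right_cancel not_gr0)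
    thus ?thesis using N unfolding Fam_def by simp
  qed
  ultimately show ?thesis unfolding Fam_def by blast
qed

lemma Op_conj_sub: assumes g: "g \<in> carrier G" and Y: "subgroup Y G"
  shows "Op G p (conjg G g Y) \<subseteq> conjg G g (Op G p Y)"
proof
  fix x assume x: "x \<in> Op G p (conjg G g Y)"
  have Yg: "subgroup (conjg G g Y) G" using conjg_subgroup[OF g Y] .
  have xc: "x \<in> carrier G" using x Op_props[OF Yg] subgroup.subset by blast
  let ?y = "g \<otimes> x \<otimes> inv g"
  have yc: "?y \<in> carrier G" using xc g by simp
  have ex: "x = inv g \<otimes> ?y \<otimes> g" using xc g by (simp add: m_assoc)
  have "?y \<in> Op G p Y" unfolding Op_Fam
  proof
    fix N assume N: "N \<in> Fam Y"
    have "x \<in> conjg G g N" using x Fam_conj[OF g Y N] unfolding Op_Fam by blast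
    then obtain n where n: "n \<in> N" "x = inv g \<otimes> n \<otimes> g" unfolding conjg_img by auto
    have nc: "n \<in> carrier G" using n Fam_sub[OF Y N] subgroup.subset by blast
    have "?y = n" using n(2) nc g by (simp add: m_assoc)
    thus "?y \<in> N" using n by simp
  qed
  thus "x \<in> conjg G g (Op G p Y)" using ex unfolding conjg_img by blast
qed

lemma Op_card_conj: assumes g: "g \<in> carrier G" and Y: "subgroup Y G"
  shows "card (Op G p (conjg G g Y)) = card (Op G p Y)"
proof -
  have le: "card (Op G p (conjg G g Y)) \<le> card (Op G p Y)" if g: "g \<in> carrier G" and Y: "subgroup Y G" for g Y
  proof -
    have s: "Op G p Y \<subseteq> carrier G" using Op_props[OF Y] subgroup.subset by blast
    have "card (Op G p (conjg G g Y)) \<le> card (conjg G g (Op G p Y))"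
      by (rule card_mono[OF conjg_finite Op_conj_sub[OF g Y]]) (use s fin rev_finite_subset in blast)
    thus ?thesis using conjg_card[OF g s] by simp
  qed
  have Ys: "Y \<subseteq> carrier G" using Y subgroup.subset by blast
  have "card (Op G p (conjg G (inv g) (conjg G g Y))) \<le> card (Op G p (conjg G g Y))"
    using le[of "inv g" "conjg G g Y"] g conjg_subgroup[OF g Y] by simp
  hence "card (Op G p Y) \<le> card (Op G p (conjg G g Y))" using conjg_inv[OF g Ys] by simp
  thus ?thesis using le[OF g Y] by simp
qed

lemma transp_cl: assumes H: "H \<subseteq> carrier G" and u: "u \<in> centr G H" and x: "x \<in> transp G H K"
  shows "u \<otimes> x \<in> transp G H K"
proof -
  have uc: "u \<in> carrier G" and xc: "x \<in> carrier G" using u x unfolding centr_def transp_def by auto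
  have "conjg G (u \<otimes> x) H = conjg G x (conjg G u H)" using conjg_comp uc xc H by simp
  also have "conjg G u H = H" unfolding conjg_img
  proof -
    have "\<And>h. h \<in> H \<Longrightarrow> inv u \<otimes> h \<otimes> u = h"
    proof -
      fix h assume h: "h \<in> H"
      have hc: "h \<in> carrier G" and uh: "u \<otimes> h = h \<otimes> u"
        using h u H unfolding centr_def by auto
      have "inv u \<otimes> h \<otimes> u = inv u \<otimes> (u \<otimes> h)" using uh hc uc by (simp add: m_assoc)
      thus "inv u \<otimes> h \<otimes> u = h" using hc uc by simp
    qed
    thus "(\<lambda>h. inv u \<otimes> h \<otimes> u) ` H = H" by simp
  qed
  finally show "u \<otimes> x \<in> transp G H K" using x uc xc unfolding transp_def by simp
qed

lemma card_homL: assumes H: "H \<subseteq> carrier G"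
  shows "card (homL G p H K) * card (Op G p (centr G H)) = card (transp G H K)"
  unfolding homL_def
  by (rule RC[OF Op_props(1)[OF centr_subgroup[OF H]] transp_sub])
     (use transp_cl[OF H] Op_props(2)[OF centr_subgroup[OF H]] in blast)

definition "cls K = {conjg G g K | g. g \<in> carrier G}"

lemma conjclasses_eq: "conjclasses G p = cls ` psubs G p"
proof -
  have "conjclasses G p = {cls K | K. K \<in> psubs G p}" unfolding conjclasses_def cls_def by simp
  thus ?thesis by (simp add: setcompr_eq_image)
qed

lemma cls_sub: "K \<in> psubs G p \<Longrightarrow> cls K \<subseteq> psubs G p"
  unfolding cls_def using psubs_conj by blast

lemma cls_self: "K \<in> psubs G p \<Longrightarrow> K \<in> cls K"
proof -
  assume K: "K \<in> psubs G p"
  have "K = conjg G \<one> K" using conjg_one[OF psubs_sub[OF K]] by simp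
  thus "K \<in> cls K" unfolding cls_def by blast
qed

lemma cls_eq: assumes K: "K \<in> psubs G p" and K': "K' \<in> cls K" shows "cls K' = cls K"
proof -
  obtain g where g: "g \<in> carrier G" "K' = conjg G g K" using K' unfolding cls_def by blast
  have Ks: "K \<subseteq> carrier G" using psubs_sub[OF K] .
  show ?thesis
  proof
    show "cls K' \<subseteq> cls K"
    proof
      fix M assume "M \<in> cls K'"
      then obtain h where h: "h \<in> carrier G" "M = conjg G h K'" unfolding cls_def by blast
      have "M = conjg G (g \<otimes> h) K" using h g conjg_comp[OF g(1) h(1) Ks] by simp
      thus "M \<in> cls K" unfolding cls_def using g(1) h(1) by blast
    qed
    show "cls K \<subseteq> cls K'"
    proof
      fix M assume "M \<in> cls K"
      then obtain k where k: "k \<in> carrier G" "M = conjg G k K" unfolding cls_def by blast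
      have "conjg G (inv g \<otimes> k) K' = M" unfolding g(2) k(2)
        using conjg_comp[OF g(1) _ Ks, of "inv g \<otimes> k"] g(1) k(1) by (simp add: m_assoc[symmetric])
      moreover have "inv g \<otimes> k \<in> carrier G" using g(1) k(1) by simp
      ultimately show "M \<in> cls K'" unfolding cls_def by blast
    qed
  qed
qed

lemma stab_eq: assumes K: "K \<in> psubs G p" shows "transp G K K = {m\<in>carrier G. conjg G m K = K}"
proof -
  have Ks: "K \<subseteq> carrier G" using psubs_sub[OF K] .
  have fK: "finite K" using Ks fin rev_finite_subset by blast
  have "conjg G m K \<subseteq> K \<longleftrightarrow> conjg G m K = K" if m: "m \<in> carrier G" for m
    using card_subset_eq[OF fK, of "conjg G m K"] conjg_card[OF m Ks] by blast
  thus ?thesis unfolding transp_def by blast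
qed

lemma orbit_stab: assumes K: "K \<in> psubs G p" shows "card (cls K) * card (transp G K K) = order G"
proof -
  have Ks: "K \<subseteq> carrier G" using psubs_sub[OF K] .
  let ?f = "\<lambda>g. conjg G g K"
  have img: "?f ` carrier G = cls K" unfolding cls_def by blast
  have fib: "card {g\<in>carrier G. ?f g = y} = card (transp G K K)" if y: "y \<in> cls K" for y
  proof -
    obtain h where h: "h \<in> carrier G" "y = ?f h" using y unfolding cls_def by blast
    have "bij_betw (\<lambda>m. m \<otimes> h) (transp G K K) {g\<in>carrier G. ?f g = y}"
    proof (rule bij_betw_byWitness[where f'="\<lambda>g. g \<otimes> inv h"])
      show "\<forall>a\<in>transp G K K. a \<otimes> h \<otimes> inv h = a" using h unfolding transp_def by (auto simp: m_assoc)
      show "\<forall>a\<in>{g \<in> carrier G. ?f g = y}. a \<otimes> inv h \<otimes> h = a" using h by (auto simp: m_assoc)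
      show "(\<lambda>m. m \<otimes> h) ` transp G K K \<subseteq> {g \<in> carrier G. ?f g = y}"
        unfolding stab_eq[OF K] using h by (auto simp flip: conjg_comp[OF _ h(1) Ks])
      show "(\<lambda>g. g \<otimes> inv h) ` {g \<in> carrier G. ?f g = y} \<subseteq> transp G K K"
      proof
        fix x assume "x \<in> (\<lambda>g. g \<otimes> inv h) ` {g \<in> carrier G. ?f g = y}"
        then obtain g where g: "g \<in> carrier G" "?f g = ?f h" "x = g \<otimes> inv h" using h by blast
        have "?f x = conjg G (inv h) (?f g)" using conjg_comp[OF g(1) _ Ks, of "inv h"] g h by simp
        also have "\<dots> = K" using g(2) conjg_inv[OF h(1) Ks] by simp
        finally show "x \<in> transp G K K" unfolding stab_eq[OF K] using g h by simp
      qed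
    qed
    thus ?thesis by (simp add: bij_betw_same_card)
  qed
  have "order G = (\<Sum>g\<in>carrier G. 1)" unfolding order_def by simp
  also have "\<dots> = (\<Sum>y\<in>?f ` carrier G. \<Sum>g\<in>{g\<in>carrier G. ?f g = y}. 1)"
    by (rule sum.image_gen[OF fin])
  also have "\<dots> = (\<Sum>y\<in>cls K. card (transp G K K))" unfolding img using fib by simp
  finally show ?thesis by simp
qed

lemma transp_pos: "K \<in> psubs G p \<Longrightarrow> card (transp G K K) > 0"
  using stab_eq conjg_one[OF psubs_sub] fin by (subst card_gt_0_iff) auto

lemma class_sum: assumes inv: "\<And>g K. g \<in> carrier G \<Longrightarrow> K \<in> psubs G p \<Longrightarrow> h (conjg G g K) = h K"
  shows "(\<Sum>K\<in>psubs G p. h K) = (\<Sum>c\<in>conjclasses G p.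
     real (order G) / real (card (transp G (SOME K. K\<in>c) (SOME K. K\<in>c))) * h (SOME K. K\<in>c))"
proof -
  have "(\<Sum>K\<in>psubs G p. h K) = (\<Sum>c\<in>cls ` psubs G p. \<Sum>K\<in>{K\<in>psubs G p. cls K = c}. h K)"
    by (rule sum.image_gen[OF psubs_finite])
  also have "\<dots> = (\<Sum>c\<in>conjclasses G p.
     real (order G) / real (card (transp G (SOME K. K\<in>c) (SOME K. K\<in>c))) * h (SOME K. K\<in>c))"
    unfolding conjclasses_eq
  proof (rule sum.cong[OF refl])
    fix c assume "c \<in> cls ` psubs G p"
    then obtain K0 where K0: "K0 \<in> psubs G p" "c = cls K0" by blast
    define R where "R = (SOME K. K\<in>c)"
    have Rc: "R \<in> c" unfolding R_def using cls_self[OF K0(1)] K0(2) by (metis someI)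
    have R: "R \<in> psubs G p" using Rc K0 cls_sub by blast
    have cR: "c = cls R" using cls_eq[OF K0(1)] Rc K0(2) by simp
    have e: "{K\<in>psubs G p. cls K = c} = c"
      using cls_eq[OF R] cls_self cls_sub[OF R] cR by blast
    have "(\<Sum>K\<in>c. h K) = (\<Sum>K\<in>c. h R)"
    proof (rule sum.cong[OF refl])
      fix K assume "K \<in> c"
      then obtain g where "g \<in> carrier G" "K = conjg G g R" unfolding cR cls_def by blast
      thus "h K = h R" using inv R by simp
    qed
    also have "\<dots> = real (card c) * h R" by simp
    also have "real (card c) = real (order G) / real (card (transp G R R))"
    proof -
      have "real (card c) * real (card (transp G R R)) = real (order G)"
        using orbit_stab[OF R] cR by (metis of_nat_mult)
      thus ?thesis using transp_pos[OF R] by (simp add: eq_divide_eq)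
    qed
    finally show "(\<Sum>K\<in>{K\<in>psubs G p. cls K = c}. h K) = real (order G) / real (card (transp G (SOME K. K\<in>c) (SOME K. K\<in>c))) * h (SOME K. K\<in>c)"
      unfolding e R_def by simp
  qed
  finally show ?thesis .
qed

end


context pfg begin

abbreviation "Ob \<equiv> psubs G p"
abbreviation "nn \<equiv> real (order G)"

lemma n_pos: "nn > 0"
  using fin order_gt_0_iff_finite by simp

lemma mu1_inv: "g \<in> carrier G \<Longrightarrow> K \<in> Ob \<Longrightarrow> mu1 G (conjg G g K) = mu1 G K"
  using mu1_conj psubsD by blast

lemma cen_inv: "g \<in> carrier G \<Longrightarrow> K \<in> Ob \<Longrightarrow> card (centr G (conjg G g K)) = card (centr G K)"
  using conjg_centr[OF _ psubs_sub] conjg_card[of g "centr G K"] unfolding centr_def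
  by (metis (no_types, lifting) mem_Collect_eq subsetI)

lemma op_inv: "g \<in> carrier G \<Longrightarrow> K \<in> Ob \<Longrightarrow> card (Op G p (centr G (conjg G g K))) = card (Op G p (centr G K))"
  using conjg_centr[OF _ psubs_sub] Op_card_conj centr_subgroup[OF psubs_sub] by metis

lemma cen_pos: "K \<subseteq> carrier G \<Longrightarrow> card (centr G K) > 0"
  using centr_subgroup sub_finite subgroup.one_closed card_gt_0_iff by blast

lemma op_pos: "K \<subseteq> carrier G \<Longrightarrow> card (Op G p (centr G K)) > 0"
  using Op_props(1)[OF centr_subgroup] sub_finite subgroup.one_closed card_gt_0_iff by blast

lemma TW: assumes a: "a \<in> Ob" and w: "\<And>g K. g \<in> carrier G \<Longrightarrow> K \<in> Ob \<Longrightarrow> w (conjg G g K) = w K"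
  shows "(\<Sum>b\<in>Ob. real (card (transp G a b)) * (\<Sum>K\<in>Ob. real_of_int (mu G b K) * w K)) = nn * w a"
proof -
  have "(\<Sum>b\<in>Ob. real (card (transp G a b)) * (\<Sum>K\<in>Ob. real_of_int (mu G b K) * w K))
      = (\<Sum>g\<in>carrier G. \<Sum>b\<in>{b\<in>Ob. conjg G g a \<subseteq> b}. \<Sum>K\<in>Ob. real_of_int (mu G b K) * w K)"
    by (rule TS)
  also have "\<dots> = (\<Sum>g\<in>carrier G. w a)"
    by (intro sum.cong refl) (simp add: W psubs_conj a w)
  finally show ?thesis unfolding order_def by simp
qed

lemma TCW: assumes b: "b \<in> Ob"
  shows "(\<Sum>a\<in>Ob. - real_of_int (mu1 G a) * real (card (transp G a b))) = nn"
proof -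
  have "(\<Sum>a\<in>Ob. - real_of_int (mu1 G a) * real (card (transp G a b)))
     = (\<Sum>g\<in>carrier G. \<Sum>a\<in>{a\<in>Ob. a \<subseteq> conjg G (inv g) b}. - real_of_int (mu1 G a))"
    by (rule TC[OF psubs_sub[OF b]])
  also have "\<dots> = (\<Sum>g\<in>carrier G. 1)"
    by (intro sum.cong refl) (simp add: sum_negf sumC1 psubs_conj b)
  finally show ?thesis unfolding order_def by simp
qed

lemma OCW: assumes b: "b \<in> Ob"
  shows "(\<Sum>a\<in>Ob. (\<Sum>H\<in>Ob. real (card H) * real_of_int (mu G H a)) * real (card (transp G a b))) = nn * real (card b)"
proof -
  have "(\<Sum>a\<in>Ob. (\<Sum>H\<in>Ob. real (card H) * real_of_int (mu G H a)) * real (card (transp G a b)))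
     = (\<Sum>g\<in>carrier G. \<Sum>a\<in>{a\<in>Ob. a \<subseteq> conjg G (inv g) b}. \<Sum>H\<in>Ob. real (card H) * real_of_int (mu G H a))"
    by (rule TC[OF psubs_sub[OF b]])
  also have "\<dots> = (\<Sum>g\<in>carrier G. real (card b))"
  proof (intro sum.cong refl)
    fix g assume g: "g \<in> carrier G"
    let ?b = "conjg G (inv g) b"
    have b': "?b \<in> Ob" using psubs_conj b g by simp
    have "(\<Sum>a\<in>{a\<in>Ob. a \<subseteq> ?b}. \<Sum>H\<in>Ob. real (card H) * real_of_int (mu G H a))
       = (\<Sum>H\<in>Ob. \<Sum>a\<in>{a\<in>Ob. a \<subseteq> ?b}. real (card H) * real_of_int (mu G H a))" by (rule sum.swap)
    also have "\<dots> = (\<Sum>H\<in>Ob. real (card H) * (if H = ?b then 1 else 0))"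
      by (intro sum.cong refl) (simp add: sum_distrib_left[symmetric] sumC b')
    also have "\<dots> = real (card ?b)" using b' psubs_finite by (simp add: if_distrib[of "\<lambda>t. _ * t"] sum.delta' cong: if_cong)
    also have "\<dots> = real (card b)" using conjg_card[OF _ psubs_sub[OF b]] g by simp
    finally show "(\<Sum>a\<in>{a\<in>Ob. a \<subseteq> ?b}. \<Sum>H\<in>Ob. real (card H) * real_of_int (mu G H a)) = real (card b)" .
  qed
  finally show ?thesis unfolding order_def by simp
qed

end


context pfg begin

abbreviation "cO K \<equiv> real (card (Op G p (centr G K)))"
abbreviation "cC K \<equiv> real (card (centr G K))"

lemma sdo0: "(\<Sum>b\<in>A. f b * (S b / (c::real))) = (\<Sum>b\<in>A. f b * S b) / c"
  by (simp add: sum_divide_distrib)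
lemma sdo1: "(\<Sum>b\<in>A. f b / d * (S b / (c::real))) = (\<Sum>b\<in>A. f b * S b) / (d * c)"
  by (simp add: sum_divide_distrib)
lemma sdo2: "(\<And>a. a \<in> A \<Longrightarrow> y a \<noteq> 0) \<Longrightarrow> (\<Sum>a\<in>A. x a * y a / (c::real) * (t a / y a)) = (\<Sum>a\<in>A. x a * t a) / c"
  by (simp add: sum_divide_distrib)
lemma sdo3: "(\<Sum>a\<in>A. x a / (c::real) * t a) = (\<Sum>a\<in>A. x a * t a) / c"
  by (simp add: sum_divide_distrib)

lemma sdo4: "(\<Sum>a\<in>A. S a / (c::real) * (t a / d)) = (\<Sum>a\<in>A. S a * t a) / (c * d)"
  by (simp add: sum_divide_distrib)

lemma homS_r: "real (card (homS a b)) = (if a \<subseteq> b then 1 else 0)" unfolding homS_def by simp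

lemma homL_r: assumes a: "a \<in> Ob" shows "real (card (homL G p a b)) = real (card (transp G a b)) / cO a"
  using card_homL[OF psubs_sub[OF a], of b] op_pos[OF psubs_sub[OF a]]
  by (simp add: eq_divide_eq) (metis of_nat_mult)

lemma homF_r: assumes a: "a \<in> Ob" shows "real (card (homF G a b)) = real (card (transp G a b)) / cC a"
  using card_homF[OF psubs_sub[OF a], of b] cen_pos[OF psubs_sub[OF a]]
  by (simp add: eq_divide_eq) (metis of_nat_mult)

lemma homO_r: "a \<in> Ob \<Longrightarrow> b \<in> Ob \<Longrightarrow> real (card (homO G a b)) = real (card (transp G a b)) / real (card b)"
proof -
  assume a: "a \<in> Ob" and b: "b \<in> Ob"
  have "card b > 0" using psubsD[OF b] sub_finite subgroup.one_closed card_gt_0_iff by blast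
  thus ?thesis using card_homO[OF psubs_sub[OF a], of b] psubsD[OF b]
    by (simp add: eq_divide_eq) (metis of_nat_mult)
qed

lemma S_w: "is_weighting Ob (\<lambda>H K. card (homS H K)) (\<lambda>H. \<Sum>K\<in>Ob. of_int (mu G H K))"
  unfolding is_weighting_def
proof
  fix a assume a: "a \<in> Ob"
  have "(\<Sum>b\<in>Ob. real (card (homS a b)) * (\<Sum>K\<in>Ob. of_int (mu G b K)))
     = (\<Sum>b\<in>Ob. if a \<subseteq> b then (\<Sum>K\<in>Ob. real_of_int (mu G b K)) else 0)"
    by (intro sum.cong refl) (simp add: homS_r)
  also have "\<dots> = (\<Sum>b\<in>{b\<in>Ob. a \<subseteq> b}. \<Sum>K\<in>Ob. real_of_int (mu G b K))"
    using psubs_finite by (simp add: sum.inter_filter)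
  also have "\<dots> = 1" using W[OF a, of "\<lambda>_. 1"] by simp
  finally show "(\<Sum>b\<in>Ob. real (card (homS a b)) * (\<Sum>K\<in>Ob. of_int (mu G b K))) = 1" .
qed

lemma S_cw: "is_coweighting Ob (\<lambda>H K. card (homS H K)) (\<lambda>K. - of_int (mu1 G K))"
  unfolding is_coweighting_def
proof
  fix b assume b: "b \<in> Ob"
  have "(\<Sum>a\<in>Ob. - real_of_int (mu1 G a) * real (card (homS a b)))
     = (\<Sum>a\<in>Ob. if a \<subseteq> b then - real_of_int (mu1 G a) else 0)"
    by (intro sum.cong refl) (simp add: homS_r)
  also have "\<dots> = (\<Sum>a\<in>{a\<in>Ob. a \<subseteq> b}. - real_of_int (mu1 G a))"
    using psubs_finite by (simp add: sum.inter_filter)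
  also have "\<dots> = - (\<Sum>a\<in>{a\<in>Ob. a \<subseteq> b}. real_of_int (mu1 G a))"
    by (simp add: sum_negf)
  also have "\<dots> = 1" using sumC1[OF b] by simp
  finally show "(\<Sum>a\<in>Ob. - of_int (mu1 G a) * real (card (homS a b))) = 1" by simp
qed

lemma T_w: "is_weighting Ob (\<lambda>H K. card (homT G H K)) (\<lambda>H. (\<Sum>K\<in>Ob. of_int (mu G H K)) / nn)"
  unfolding is_weighting_def homT_def
proof
  fix a assume a: "a \<in> Ob"
  have "(\<Sum>b\<in>Ob. real (card (transp G a b)) * ((\<Sum>K\<in>Ob. of_int (mu G b K)) / nn))
     = (\<Sum>b\<in>Ob. real (card (transp G a b)) * (\<Sum>K\<in>Ob. real_of_int (mu G b K))) / nn"
    by (rule sdo0)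
  also have "\<dots> = 1" using TW[OF a, of "\<lambda>_. 1"] n_pos by simp
  finally show "(\<Sum>b\<in>Ob. real (card (transp G a b)) * ((\<Sum>K\<in>Ob. of_int (mu G b K)) / nn)) = 1" .
qed

lemma T_cw: "is_coweighting Ob (\<lambda>H K. card (homT G H K)) (\<lambda>K. - of_int (mu1 G K) / nn)"
  unfolding is_coweighting_def homT_def
proof
  fix b assume b: "b \<in> Ob"
  have "(\<Sum>a\<in>Ob. - of_int (mu1 G a) / nn * real (card (transp G a b)))
     = (\<Sum>a\<in>Ob. - real_of_int (mu1 G a) * real (card (transp G a b))) / nn"
    by (rule sdo3)
  also have "\<dots> = 1" using TCW[OF b] n_pos by simp
  finally show "(\<Sum>a\<in>Ob. - of_int (mu1 G a) / nn * real (card (transp G a b))) = 1" .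
qed

lemma L_w: "is_weighting Ob (\<lambda>H K. card (homL G p H K))
          (\<lambda>H. (\<Sum>K\<in>Ob. of_int (mu G H K) * cO K) / nn)"
  unfolding is_weighting_def
proof
  fix a assume a: "a \<in> Ob"
  have "(\<Sum>b\<in>Ob. real (card (homL G p a b)) * ((\<Sum>K\<in>Ob. of_int (mu G b K) * cO K) / nn))
     = (\<Sum>b\<in>Ob. real (card (transp G a b)) * (\<Sum>K\<in>Ob. real_of_int (mu G b K) * cO K)) / (cO a * nn)"
    unfolding homL_r[OF a] by (rule sdo1)
  also have "\<dots> = 1" using TW[OF a, of cO] op_inv n_pos op_pos[OF psubs_sub[OF a]] by simp
  finally show "(\<Sum>b\<in>Ob. real (card (homL G p a b)) * ((\<Sum>K\<in>Ob. of_int (mu G b K) * cO K) / nn)) = 1" .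
qed

lemma L_cw: "is_coweighting Ob (\<lambda>H K. card (homL G p H K)) (\<lambda>K. - of_int (mu1 G K) * cO K / nn)"
  unfolding is_coweighting_def
proof
  fix b assume b: "b \<in> Ob"
  have "(\<Sum>a\<in>Ob. - of_int (mu1 G a) * cO a / nn * real (card (homL G p a b)))
     = (\<Sum>a\<in>Ob. - real_of_int (mu1 G a) * real (card (transp G a b))) / nn"
  proof -
    have "(\<Sum>a\<in>Ob. - of_int (mu1 G a) * cO a / nn * real (card (homL G p a b)))
       = (\<Sum>a\<in>Ob. - of_int (mu1 G a) * cO a / nn * (real (card (transp G a b)) / cO a))"
      by (intro sum.cong refl) (simp add: homL_r)
    also have "\<dots> = (\<Sum>a\<in>Ob. - real_of_int (mu1 G a) * real (card (transp G a b))) / nn"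
      by (rule sdo2) (use op_pos[OF psubs_sub] in simp)
    finally show ?thesis .
  qed
  also have "\<dots> = 1" using TCW[OF b] n_pos by simp
  finally show "(\<Sum>a\<in>Ob. - of_int (mu1 G a) * cO a / nn * real (card (homL G p a b))) = 1" .
qed

lemma F_w: "is_weighting Ob (\<lambda>H K. card (homF G H K))
          (\<lambda>H. (\<Sum>K\<in>Ob. of_int (mu G H K) * cC K) / nn)"
  unfolding is_weighting_def
proof
  fix a assume a: "a \<in> Ob"
  have "(\<Sum>b\<in>Ob. real (card (homF G a b)) * ((\<Sum>K\<in>Ob. of_int (mu G b K) * cC K) / nn))
     = (\<Sum>b\<in>Ob. real (card (transp G a b)) * (\<Sum>K\<in>Ob. real_of_int (mu G b K) * cC K)) / (cC a * nn)"
    unfolding homF_r[OF a] by (rule sdo1)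
  also have "\<dots> = 1" using TW[OF a, of cC] cen_inv n_pos cen_pos[OF psubs_sub[OF a]] by simp
  finally show "(\<Sum>b\<in>Ob. real (card (homF G a b)) * ((\<Sum>K\<in>Ob. of_int (mu G b K) * cC K) / nn)) = 1" .
qed

lemma F_cw: "is_coweighting Ob (\<lambda>H K. card (homF G H K)) (\<lambda>K. - of_int (mu1 G K) * cC K / nn)"
  unfolding is_coweighting_def
proof
  fix b assume b: "b \<in> Ob"
  have "(\<Sum>a\<in>Ob. - of_int (mu1 G a) * cC a / nn * real (card (homF G a b)))
     = (\<Sum>a\<in>Ob. - real_of_int (mu1 G a) * real (card (transp G a b))) / nn"
  proof -
    have "(\<Sum>a\<in>Ob. - of_int (mu1 G a) * cC a / nn * real (card (homF G a b)))
       = (\<Sum>a\<in>Ob. - of_int (mu1 G a) * cC a / nn * (real (card (transp G a b)) / cC a))"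
      by (intro sum.cong refl) (simp add: homF_r)
    also have "\<dots> = (\<Sum>a\<in>Ob. - real_of_int (mu1 G a) * real (card (transp G a b))) / nn"
      by (rule sdo2) (use cen_pos[OF psubs_sub] in simp)
    finally show ?thesis .
  qed
  also have "\<dots> = 1" using TCW[OF b] n_pos by simp
  finally show "(\<Sum>a\<in>Ob. - of_int (mu1 G a) * cC a / nn * real (card (homF G a b))) = 1" .
qed

lemma O_w: "is_weighting Ob (\<lambda>H K. card (homO G H K)) (\<lambda>H. real (card H) * (\<Sum>K\<in>Ob. of_int (mu G H K)) / nn)"
  unfolding is_weighting_def
proof
  fix a assume a: "a \<in> Ob"
  have "(\<Sum>b\<in>Ob. real (card (homO G a b)) * (real (card b) * (\<Sum>K\<in>Ob. of_int (mu G b K)) / nn))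
     = (\<Sum>b\<in>Ob. real (card (transp G a b)) * (\<Sum>K\<in>Ob. real_of_int (mu G b K))) / nn"
    unfolding sdo0[symmetric]
  proof (intro sum.cong refl)
    fix b assume b: "b \<in> Ob"
    have "card b > 0" using psubsD[OF b] sub_finite subgroup.one_closed card_gt_0_iff by blast
    thus "real (card (homO G a b)) * (real (card b) * (\<Sum>K\<in>Ob. of_int (mu G b K)) / nn)
        = real (card (transp G a b)) * ((\<Sum>K\<in>Ob. real_of_int (mu G b K)) / nn)"
      using homO_r[OF a b] by simp
  qed
  also have "\<dots> = 1" using TW[OF a, of "\<lambda>_. 1"] n_pos by simp
  finally show "(\<Sum>b\<in>Ob. real (card (homO G a b)) * (real (card b) * (\<Sum>K\<in>Ob. of_int (mu G b K)) / nn)) = 1" .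
qed

lemma O_cw: "is_coweighting Ob (\<lambda>H K. card (homO G H K)) (\<lambda>K. (\<Sum>H\<in>Ob. real (card H) * of_int (mu G H K)) / nn)"
  unfolding is_coweighting_def
proof
  fix b assume b: "b \<in> Ob"
  have cb: "card b > 0" using psubsD[OF b] sub_finite subgroup.one_closed card_gt_0_iff by blast
  have "(\<Sum>a\<in>Ob. (\<Sum>H\<in>Ob. real (card H) * of_int (mu G H a)) / nn * real (card (homO G a b)))
     = (\<Sum>a\<in>Ob. (\<Sum>H\<in>Ob. real (card H) * real_of_int (mu G H a)) * real (card (transp G a b))) / (nn * real (card b))"
  proof -
    have "(\<Sum>a\<in>Ob. (\<Sum>H\<in>Ob. real (card H) * of_int (mu G H a)) / nn * real (card (homO G a b)))
      = (\<Sum>a\<in>Ob. (\<Sum>H\<in>Ob. real (card H) * of_int (mu G H a)) / nn * (real (card (transp G a b)) / real (card b)))"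
      by (intro sum.cong refl) (simp add: homO_r b)
    also have "\<dots> = (\<Sum>a\<in>Ob. (\<Sum>H\<in>Ob. real (card H) * real_of_int (mu G H a)) * real (card (transp G a b))) / (nn * real (card b))"
      by (rule sdo4)
    finally show ?thesis .
  qed
  also have "\<dots> = 1" using OCW[OF b] n_pos cb by simp
  finally show "(\<Sum>a\<in>Ob. (\<Sum>H\<in>Ob. real (card H) * of_int (mu G H a)) / nn * real (card (homO G a b))) = 1" .
qed

end


context pfg begin

lemma rep_in: "c \<in> conjclasses G p \<Longrightarrow> (SOME K. K \<in> c) \<in> Ob"
proof -
  assume "c \<in> conjclasses G p"
  then obtain K0 where K0: "K0 \<in> Ob" "c = cls K0" unfolding conjclasses_eq by blast
  have "(SOME K. K \<in> c) \<in> c" using cls_self[OF K0(1)] K0(2) by (metis someI)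
  thus ?thesis using cls_sub[OF K0(1)] K0(2) by blast
qed

lemma chi_T: "euler_char Ob (\<lambda>H K. card (homT G H K)) =
   (\<Sum>c\<in>conjclasses G p. let K = (SOME K. K \<in> c) in - of_int (mu1 G K) / real (card (homT G K K)))"
proof -
  have "euler_char Ob (\<lambda>H K. card (homT G H K)) = (\<Sum>K\<in>Ob. - of_int (mu1 G K) / nn)"
    by (rule euler_char_eq[OF psubs_finite T_w T_cw])
  also have "\<dots> = (\<Sum>c\<in>conjclasses G p. nn / real (card (transp G (SOME K. K\<in>c) (SOME K. K\<in>c))) * (- of_int (mu1 G (SOME K. K\<in>c)) / nn))"
    by (rule class_sum) (simp add: mu1_inv)
  also have "\<dots> = (\<Sum>c\<in>conjclasses G p. let K = (SOME K. K \<in> c) in - of_int (mu1 G K) / real (card (homT G K K)))"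
    using n_pos by (intro sum.cong refl) (simp add: Let_def homT_def)
  finally show ?thesis .
qed

lemma chi_L: "euler_char Ob (\<lambda>H K. card (homL G p H K)) =
   (\<Sum>c\<in>conjclasses G p. let K = (SOME K. K \<in> c) in - of_int (mu1 G K) / real (card (homL G p K K)))"
proof -
  have "euler_char Ob (\<lambda>H K. card (homL G p H K)) = (\<Sum>K\<in>Ob. - of_int (mu1 G K) * cO K / nn)"
    by (rule euler_char_eq[OF psubs_finite L_w L_cw])
  also have "\<dots> = (\<Sum>c\<in>conjclasses G p. nn / real (card (transp G (SOME K. K\<in>c) (SOME K. K\<in>c))) * (- of_int (mu1 G (SOME K. K\<in>c)) * cO (SOME K. K\<in>c) / nn))"
    by (rule class_sum) (simp add: mu1_inv op_inv)
  also have "\<dots> = (\<Sum>c\<in>conjclasses G p. let K = (SOME K. K \<in> c) in - of_int (mu1 G K) / real (card (homL G p K K)))"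
  proof (intro sum.cong refl)
    fix c assume c: "c \<in> conjclasses G p"
    define R where "R = (SOME K. K \<in> c)"
    have R: "R \<in> Ob" using rep_in[OF c] R_def by simp
    show "nn / real (card (transp G (SOME K. K\<in>c) (SOME K. K\<in>c))) * (- of_int (mu1 G (SOME K. K\<in>c)) * cO (SOME K. K\<in>c) / nn)
        = (let K = (SOME K. K \<in> c) in - of_int (mu1 G K) / real (card (homL G p K K)))"
      unfolding R_def[symmetric] Let_def homL_r[OF R] using n_pos op_pos[OF psubs_sub[OF R]] by simp
  qed
  finally show ?thesis .
qed

lemma chi_F: "euler_char Ob (\<lambda>H K. card (homF G H K)) =
   (\<Sum>c\<in>conjclasses G p. let K = (SOME K. K \<in> c) in - of_int (mu1 G K) / real (card (homF G K K)))"
proof -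
  have "euler_char Ob (\<lambda>H K. card (homF G H K)) = (\<Sum>K\<in>Ob. - of_int (mu1 G K) * cC K / nn)"
    by (rule euler_char_eq[OF psubs_finite F_w F_cw])
  also have "\<dots> = (\<Sum>c\<in>conjclasses G p. nn / real (card (transp G (SOME K. K\<in>c) (SOME K. K\<in>c))) * (- of_int (mu1 G (SOME K. K\<in>c)) * cC (SOME K. K\<in>c) / nn))"
    by (rule class_sum) (simp add: mu1_inv cen_inv)
  also have "\<dots> = (\<Sum>c\<in>conjclasses G p. let K = (SOME K. K \<in> c) in - of_int (mu1 G K) / real (card (homF G K K)))"
  proof (intro sum.cong refl)
    fix c assume c: "c \<in> conjclasses G p"
    define R where "R = (SOME K. K \<in> c)"
    have R: "R \<in> Ob" using rep_in[OF c] R_def by simp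
    show "nn / real (card (transp G (SOME K. K\<in>c) (SOME K. K\<in>c))) * (- of_int (mu1 G (SOME K. K\<in>c)) * cC (SOME K. K\<in>c) / nn)
        = (let K = (SOME K. K \<in> c) in - of_int (mu1 G K) / real (card (homF G K K)))"
      unfolding R_def[symmetric] Let_def homF_r[OF R] using n_pos cen_pos[OF psubs_sub[OF R]] by simp
  qed
  finally show ?thesis .
qed

lemma chi_S: "euler_char Ob (\<lambda>H K. card (homS H K)) = nn * euler_char Ob (\<lambda>H K. card (homT G H K))"
proof -
  have "euler_char Ob (\<lambda>H K. card (homS H K)) = (\<Sum>K\<in>Ob. - of_int (mu1 G K))"
    by (rule euler_char_eq[OF psubs_finite S_w S_cw])
  moreover have "euler_char Ob (\<lambda>H K. card (homT G H K)) = (\<Sum>K\<in>Ob. - of_int (mu1 G K) / nn)"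
    by (rule euler_char_eq[OF psubs_finite T_w T_cw])
  moreover have "(\<Sum>K\<in>Ob. - of_int (mu1 G K) / nn) = (\<Sum>K\<in>Ob. - of_int (mu1 G K)) / nn"
    by (rule sum_divide_distrib[symmetric])
  ultimately show ?thesis using n_pos by simp
qed

lemma chi_O: "euler_char Ob (\<lambda>H K. card (homO G H K)) = (\<Sum>H\<in>Ob. \<Sum>K\<in>Ob. real (card H) * of_int (mu G H K)) / nn"
proof -
  have "euler_char Ob (\<lambda>H K. card (homO G H K)) = (\<Sum>K\<in>Ob. (\<Sum>H\<in>Ob. real (card H) * of_int (mu G H K)) / nn)"
    by (rule euler_char_eq[OF psubs_finite O_w O_cw])
  also have "\<dots> = (\<Sum>K\<in>Ob. \<Sum>H\<in>Ob. real (card H) * of_int (mu G H K)) / nn"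
    by (simp only: sum_divide_distrib)
  also have "\<dots> = (\<Sum>H\<in>Ob. \<Sum>K\<in>Ob. real (card H) * of_int (mu G H K)) / nn"
    by (subst sum.swap) (rule refl)
  finally show ?thesis .
qed

end

theorem theorem3p2:
  fixes G :: "('a,'b) monoid_scheme" and p :: nat
  assumes "group G" and "finite (carrier G)" and "Factorial_Ring.prime p"
  defines "Ob \<equiv> psubs G p"
      and "n \<equiv> real (order G)"
      and "zS \<equiv> (\<lambda>H K. card (homS H K))"
      and "zT \<equiv> (\<lambda>H K. card (homT G H K))"
      and "zL \<equiv> (\<lambda>H K. card (homL G p H K))"
      and "zF \<equiv> (\<lambda>H K. card (homF G H K))"
      and "zO \<equiv> (\<lambda>H K. card (homO G H K))"
  shows
    \<comment> \<open>(i)\<close>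
    "(is_weighting Ob zS (\<lambda>H. \<Sum>K\<in>Ob. of_int (mu G H K))
      \<and> is_coweighting Ob zS (\<lambda>K. - of_int (mu1 G K))
      \<and> euler_char Ob zS = n * euler_char Ob zT)
    \<comment> \<open>(ii)\<close>
    \<and> (is_weighting Ob zT (\<lambda>H. (\<Sum>K\<in>Ob. of_int (mu G H K)) / n)
      \<and> is_coweighting Ob zT (\<lambda>K. - of_int (mu1 G K) / n)
      \<and> euler_char Ob zT =
          (\<Sum>c\<in>conjclasses G p. let K = (SOME K. K \<in> c) in - of_int (mu1 G K) / real (zT K K)))
    \<comment> \<open>(iii)\<close>
    \<and> (is_weighting Ob zL
          (\<lambda>H. (\<Sum>K\<in>Ob. of_int (mu G H K) * real (card (Op G p (centr G K)))) / n)
      \<and> is_coweighting Ob zL (\<lambda>K. - of_int (mu1 G K) * real (card (Op G p (centr G K))) / n)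
      \<and> euler_char Ob zL =
          (\<Sum>c\<in>conjclasses G p. let K = (SOME K. K \<in> c) in - of_int (mu1 G K) / real (zL K K)))
    \<comment> \<open>(iv)\<close>
    \<and> (is_weighting Ob zF
          (\<lambda>H. (\<Sum>K\<in>Ob. of_int (mu G H K) * real (card (centr G K))) / n)
      \<and> is_coweighting Ob zF (\<lambda>K. - of_int (mu1 G K) * real (card (centr G K)) / n)
      \<and> euler_char Ob zF =
          (\<Sum>c\<in>conjclasses G p. let K = (SOME K. K \<in> c) in - of_int (mu1 G K) / real (zF K K)))
    \<comment> \<open>(v)\<close>
    \<and> (is_weighting Ob zO (\<lambda>H. real (card H) * (\<Sum>K\<in>Ob. of_int (mu G H K)) / n)
      \<and> is_coweighting Ob zO (\<lambda>K. (\<Sum>H\<in>Ob. real (card H) * of_int (mu G H K)) / n)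
      \<and> euler_char Ob zO = (\<Sum>H\<in>Ob. \<Sum>K\<in>Ob. real (card H) * of_int (mu G H K)) / n)"
proof -
  interpret pfg G p using assms(1,2,3) by (simp add: pfg_def pfg_axioms_def fgroup_def fgroup_axioms_def)
  show ?thesis unfolding Ob_def n_def zS_def zT_def zL_def zF_def zO_def
    using S_w S_cw chi_S T_w T_cw chi_T L_w L_cw chi_L F_w F_cw chi_F O_w O_cw chi_O
    by (simp add: homT_def)
qed


end
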